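(* Let $\alpha,\beta>0$ and let $\lambda\in\mathbb{R}$, $a,b>0$. Let $X,Y$ be independent random variables with $X\sim \mathrm{GIG}(\lambda,a,b;\alpha,1)$ and $Y\sim\mathrm{GIG}(-\lambda,a,b;\beta,1)$, and set $(U,V)=H_{III,A}^{\alpha,\beta}(X,Y)$. Then $U$ and $V$ are independent, with $U\sim\mathrm{GIG}(-\lambda,a,b;\alpha,1)$ and $V\sim \mathrm{GIG}(\lambda,a,b;\beta,1)$.
   Context: $\mathbb{R}_+=(0,\infty)$. For $\alpha,\beta>0$ the map $H_{III,A}^{\alpha,\beta}:\mathbb{R}_+^2\to\mathbb{R}_+^2$ is $$H_{III,A}^{\alpha,\beta}(x,y)=\left(\frac{y}{\alpha}\,\frac{\alpha x+\beta y}{x+y},\ \frac{x}{\beta}\,\frac{\alpha x+\beta y}{x+y}\right).$$ For $p,q>0$, $\lambda\in\mathbb{R}$ and $a,b>0$, the generalized inverse Gaussian distribution $\mathrm{GIG}(\lambda,a,b;p,q)$ is the probability distribution on $\mathbb{R}_+$ with density proportional to $x^{\lambda-1}e^{-apx-bqx^{-1}}$, $x\in\mathbb{R}_+$. *)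

theory Defs
  imports "HOL-Probability.Probability"
begin

definition H_IIIA :: "real \<Rightarrow> real \<Rightarrow> real \<times> real \<Rightarrow> real \<times> real" where
  "H_IIIA \<alpha> \<beta> = (\<lambda>(x, y).
     ((y / \<alpha>) * ((\<alpha> * x + \<beta> * y) / (x + y)),
      (x / \<beta>) * ((\<alpha> * x + \<beta> * y) / (x + y))))"

definition gig_kernel :: "real \<Rightarrow> real \<Rightarrow> real \<Rightarrow> real \<Rightarrow> real \<Rightarrow> real \<Rightarrow> real" where
  "gig_kernel lam a b p q x =
     (if 0 < x then x powr (lam - 1) * exp (- a * p * x - b * q / x) else 0)"

definition gig_const :: "real \<Rightarrow> real \<Rightarrow> real \<Rightarrow> real \<Rightarrow> real \<Rightarrow> real" where
  "gig_const lam a b p q = (\<integral>x. gig_kernel lam a b p q x \<partial>lborel)"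

definition gig_density :: "real \<Rightarrow> real \<Rightarrow> real \<Rightarrow> real \<Rightarrow> real \<Rightarrow> real \<Rightarrow> ennreal" where
  "gig_density lam a b p q x = ennreal (gig_kernel lam a b p q x / gig_const lam a b p q)"

end

theory Submission imports Defs begin

lemma scale_pos:
  fixes f :: "real \<Rightarrow> ennreal" and c :: real
  assumes [measurable]: "f \<in> borel_measurable borel" and c: "c > 0"
  shows "(\<integral>\<^sup>+x. f x \<partial>lborel) = (\<integral>\<^sup>+w. f (c * w) * ennreal c \<partial>lborel)"
proof -
  have "(\<integral>\<^sup>+x. f x \<partial>lborel) = ennreal \<bar>c\<bar> * (\<integral>\<^sup>+x. f (0 + c * x) \<partial>lborel)"
    using c by (intro nn_integral_real_affine) auto
  also have "\<dots> = (\<integral>\<^sup>+w. f (c * w) * ennreal c \<partial>lborel)"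
    using c by (subst nn_integral_cmult[symmetric]) (auto simp: mult.commute)
  finally show ?thesis .
qed

lemma T1:
  fixes F :: "real \<times> real \<Rightarrow> ennreal" and \<alpha> \<beta> :: real
  assumes Fm[measurable]: "F \<in> borel_measurable (lborel \<Otimes>\<^sub>M lborel)" and ab: "\<alpha> > 0" "\<beta> > 0"
    and Fz: "\<And>x y. \<not> (0 < x \<and> 0 < y) \<Longrightarrow> F (x, y) = 0"
  shows "integral\<^sup>N (lborel \<Otimes>\<^sub>M lborel) F =
    (\<integral>\<^sup>+w. indicator {0<..} w * (\<integral>\<^sup>+s. F (s*w/(\<alpha>*w+\<beta>), s/(\<alpha>*w+\<beta>)) * ennreal (s/(\<alpha>*w+\<beta>)^2) \<partial>lborel) \<partial>lborel)"
proof -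
  have "integral\<^sup>N (lborel \<Otimes>\<^sub>M lborel) F = (\<integral>\<^sup>+y. \<integral>\<^sup>+x. F (x,y) \<partial>lborel \<partial>lborel)"
    by (rule lborel_pair.nn_integral_snd[symmetric]) simp
  also have "\<dots> = (\<integral>\<^sup>+y. \<integral>\<^sup>+w. F (y*w,y) * ennreal y \<partial>lborel \<partial>lborel)"
  proof (rule nn_integral_cong)
    fix y :: real
    show "(\<integral>\<^sup>+x. F (x,y) \<partial>lborel) = (\<integral>\<^sup>+w. F (y*w,y) * ennreal y \<partial>lborel)"
    proof (cases "y > 0")
      case True then show ?thesis using scale_pos[where f="\<lambda>x. F (x,y)" and c=y] by simp
    next
      case False then show ?thesis by (simp add: Fz ennreal_neg)
    qed
  qed
  also have "\<dots> = (\<integral>\<^sup>+w. \<integral>\<^sup>+y. F (y*w,y) * ennreal y \<partial>lborel \<partial>lborel)"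
    by (rule lborel_pair.Fubini') simp
  also have "\<dots> = (\<integral>\<^sup>+w. indicator {0<..} w * (\<integral>\<^sup>+s. F (s*w/(\<alpha>*w+\<beta>), s/(\<alpha>*w+\<beta>)) * ennreal (s/(\<alpha>*w+\<beta>)^2) \<partial>lborel) \<partial>lborel)"
  proof (rule nn_integral_cong)
    fix w :: real
    show "(\<integral>\<^sup>+y. F (y*w,y) * ennreal y \<partial>lborel) = indicator {0<..} w * (\<integral>\<^sup>+s. F (s*w/(\<alpha>*w+\<beta>), s/(\<alpha>*w+\<beta>)) * ennreal (s/(\<alpha>*w+\<beta>)^2) \<partial>lborel)"
    proof (cases "w > 0")
      case True
      have c: "1/(\<alpha>*w+\<beta>) > 0" using True ab by (simp add: add_pos_pos)
      have "(\<integral>\<^sup>+y. F (y*w,y) * ennreal y \<partial>lborel) = (\<integral>\<^sup>+s. (F ((1/(\<alpha>*w+\<beta>) * s)*w, 1/(\<alpha>*w+\<beta>) * s) * ennreal (1/(\<alpha>*w+\<beta>) * s)) * ennreal (1/(\<alpha>*w+\<beta>)) \<partial>lborel)"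
        by (rule scale_pos[OF _ c]) simp
      also have "\<dots> = (\<integral>\<^sup>+s. F (s*w/(\<alpha>*w+\<beta>), s/(\<alpha>*w+\<beta>)) * ennreal (s/(\<alpha>*w+\<beta>)^2) \<partial>lborel)"
      proof (rule nn_integral_cong)
        fix s :: real
        show "F ((1/(\<alpha>*w+\<beta>) * s)*w, 1/(\<alpha>*w+\<beta>) * s) * ennreal (1/(\<alpha>*w+\<beta>) * s) * ennreal (1/(\<alpha>*w+\<beta>)) = F (s*w/(\<alpha>*w+\<beta>), s/(\<alpha>*w+\<beta>)) * ennreal (s/(\<alpha>*w+\<beta>)^2)"
        proof (cases "s > 0")
          case True
          have e1: "1/(\<alpha>*w+\<beta>) * s = s/(\<alpha>*w+\<beta>)" by simp
          have e: "ennreal (s/(\<alpha>*w+\<beta>)) * ennreal (1/(\<alpha>*w+\<beta>)) = ennreal (s/(\<alpha>*w+\<beta>)^2)"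
            using c True by (subst ennreal_mult[symmetric]) (auto simp: power2_eq_square)
          show ?thesis by (simp only: mult.assoc times_divide_eq_left mult_1_left e)
        next
          case False
          have "s/(\<alpha>*w+\<beta>) \<le> 0" "s/(\<alpha>*w+\<beta>)^2 \<le> 0"
            using False c by (auto intro!: divide_nonpos_pos)
          then show ?thesis by (simp add: ennreal_neg)
        qed
      qed
      finally show ?thesis using True by simp
    next
      case False
      have "F (y*w, y) * ennreal y = 0" for y
      proof (cases "y > 0")
        case True
        then have "y * w \<le> 0" using False by (simp add: mult_nonneg_nonpos)
        then show ?thesis using Fz by simp
      qed (simp add: Fz)
      then show ?thesis using False by (simp del: mult_eq_0_iff)
    qed
  qed
  finally show ?thesis .
qed

lemma T2:
  fixes F :: "real \<times> real \<Rightarrow> ennreal" and \<alpha> \<beta> :: real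
  assumes Fm[measurable]: "F \<in> borel_measurable (lborel \<Otimes>\<^sub>M lborel)" and ab: "\<alpha> > 0" "\<beta> > 0"
    and Fz: "\<And>x y. \<not> (0 < x \<and> 0 < y) \<Longrightarrow> F (x, y) = 0"
  shows "integral\<^sup>N (lborel \<Otimes>\<^sub>M lborel) F =
    (\<integral>\<^sup>+w. indicator {0<..} w * (\<integral>\<^sup>+s. F (s/(\<alpha>*(1+w)), s*w/(\<beta>*(1+w))) * ennreal (s/(\<alpha>*\<beta>*(1+w)^2)) \<partial>lborel) \<partial>lborel)"
proof -
  have "integral\<^sup>N (lborel \<Otimes>\<^sub>M lborel) F = (\<integral>\<^sup>+u. \<integral>\<^sup>+v. F (u,v) \<partial>lborel \<partial>lborel)"
    by (rule lborel.nn_integral_fst[symmetric]) simp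
  also have "\<dots> = (\<integral>\<^sup>+u. \<integral>\<^sup>+w. F (u, (\<alpha>*u/\<beta>)*w) * ennreal (\<alpha>*u/\<beta>) \<partial>lborel \<partial>lborel)"
  proof (rule nn_integral_cong)
    fix u :: real
    show "(\<integral>\<^sup>+v. F (u,v) \<partial>lborel) = (\<integral>\<^sup>+w. F (u, (\<alpha>*u/\<beta>)*w) * ennreal (\<alpha>*u/\<beta>) \<partial>lborel)"
    proof (cases "u > 0")
      case True then show ?thesis using scale_pos[where f="\<lambda>v. F (u,v)" and c="\<alpha>*u/\<beta>"] ab by simp
    next
      case False then show ?thesis by (simp add: Fz)
    qed
  qed
  also have "\<dots> = (\<integral>\<^sup>+w. \<integral>\<^sup>+u. F (u, (\<alpha>*u/\<beta>)*w) * ennreal (\<alpha>*u/\<beta>) \<partial>lborel \<partial>lborel)"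
    by (rule lborel_pair.Fubini'[symmetric]) simp
  also have "\<dots> = (\<integral>\<^sup>+w. indicator {0<..} w * (\<integral>\<^sup>+s. F (s/(\<alpha>*(1+w)), s*w/(\<beta>*(1+w))) * ennreal (s/(\<alpha>*\<beta>*(1+w)^2)) \<partial>lborel) \<partial>lborel)"
  proof (rule nn_integral_cong)
    fix w :: real
    show "(\<integral>\<^sup>+u. F (u, (\<alpha>*u/\<beta>)*w) * ennreal (\<alpha>*u/\<beta>) \<partial>lborel) = indicator {0<..} w * (\<integral>\<^sup>+s. F (s/(\<alpha>*(1+w)), s*w/(\<beta>*(1+w))) * ennreal (s/(\<alpha>*\<beta>*(1+w)^2)) \<partial>lborel)"
    proof (cases "w > 0")
      case True
      have c: "1/(\<alpha>*(1+w)) > 0" using True ab by simp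
      have "(\<integral>\<^sup>+u. F (u, (\<alpha>*u/\<beta>)*w) * ennreal (\<alpha>*u/\<beta>) \<partial>lborel) = (\<integral>\<^sup>+s. (F (1/(\<alpha>*(1+w)) * s, (\<alpha>*(1/(\<alpha>*(1+w)) * s)/\<beta>)*w) * ennreal (\<alpha>*(1/(\<alpha>*(1+w)) * s)/\<beta>)) * ennreal (1/(\<alpha>*(1+w))) \<partial>lborel)"
        by (rule scale_pos[OF _ c]) simp
      also have "\<dots> = (\<integral>\<^sup>+s. F (s/(\<alpha>*(1+w)), s*w/(\<beta>*(1+w))) * ennreal (s/(\<alpha>*\<beta>*(1+w)^2)) \<partial>lborel)"
      proof (rule nn_integral_cong)
        fix s :: real
        have a1: "1/(\<alpha>*(1+w)) * s = s/(\<alpha>*(1+w))" by simp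
        have a3: "\<alpha>*(1/(\<alpha>*(1+w)) * s)/\<beta> = s/(\<beta>*(1+w))" using ab True by (simp add: divide_simps)
        have a2: "(\<alpha>*(1/(\<alpha>*(1+w)) * s)/\<beta>)*w = s*w/(\<beta>*(1+w))" unfolding a3 by simp
        show "F (1/(\<alpha>*(1+w)) * s, (\<alpha>*(1/(\<alpha>*(1+w)) * s)/\<beta>)*w) * ennreal (\<alpha>*(1/(\<alpha>*(1+w)) * s)/\<beta>) * ennreal (1/(\<alpha>*(1+w))) = F (s/(\<alpha>*(1+w)), s*w/(\<beta>*(1+w))) * ennreal (s/(\<alpha>*\<beta>*(1+w)^2))"
        proof (cases "s > 0")
          case True
          have e: "ennreal (s/(\<beta>*(1+w))) * ennreal (1/(\<alpha>*(1+w))) = ennreal (s/(\<alpha>*\<beta>*(1+w)^2))"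
            using c True ab \<open>w > 0\<close> by (subst ennreal_mult[symmetric]) (auto simp: power2_eq_square)
          show ?thesis unfolding a2 unfolding a3 by (simp only: a1 mult.assoc e)
        next
          case False
          have "s/(\<beta>*(1+w)) \<le> 0" "s/(\<alpha>*\<beta>*(1+w)^2) \<le> 0"
            using False ab \<open>w > 0\<close> by (auto intro!: divide_nonpos_pos)
          then show ?thesis unfolding a2 unfolding a3 by (simp add: ennreal_neg)
        qed
      qed
      finally show ?thesis using True by simp
    next
      case False
      have "F (u, (\<alpha>*u/\<beta>)*w) * ennreal (\<alpha>*u/\<beta>) = 0" for u
      proof (cases "u > 0")
        case True
        then have "(\<alpha>*u/\<beta>) * w \<le> 0" using False ab by (intro mult_nonneg_nonpos) auto
        then show ?thesis using Fz by simp
      qed (simp add: Fz)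
      then show ?thesis using False by (simp del: mult_eq_0_iff)
    qed
  qed
  finally show ?thesis .
qed

lemma H_pt:
  fixes \<alpha> \<beta> s w :: real
  assumes ab: "\<alpha> > 0" "\<beta> > 0" and sw: "s > 0" "w > 0"
  shows "H_IIIA \<alpha> \<beta> (s*w/(\<alpha>*w+\<beta>), s/(\<alpha>*w+\<beta>)) = (s/(\<alpha>*(1+w)), s*w/(\<beta>*(1+w)))"
proof -
  obtain c where cdef: "\<alpha>*w+\<beta> = c" by blast
  have c: "c > 0" using ab sw cdef by (metis add_pos_pos mult_pos_pos)
  have xy: "s*w/c + s/c = s*(1+w)/c" using c by (simp add: field_simps)
  have ss: "\<alpha> * (s*w/c) + \<beta> * (s/c) = s" using c by (simp add: field_simps) (simp add: cdef[symmetric] algebra_simps)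
  obtain d where ddef: "1+w = d" by blast
  have d: "d > 0" using sw ddef by simp
  have q: "s / (s*d/c) = c/d" using c sw d by (simp add: field_simps)
  have r1: "s/c/\<alpha> * (c/d) = s/(\<alpha>*d)" using c ab sw d by (simp add: field_simps)
  have r2: "s*w/c/\<beta> * (c/d) = s*w/(\<beta>*d)" using c ab sw d by (simp add: field_simps)
  show ?thesis unfolding H_IIIA_def cdef
    by (simp only: case_prod_conv xy ss q r1 r2 ddef)
qed

lemma exp_pt:
  fixes \<alpha> \<beta> s w a b :: real
  assumes ab: "\<alpha> > 0" "\<beta> > 0" and sw: "s > 0" "w > 0"
  defines "x \<equiv> s*w/(\<alpha>*w+\<beta>)" and "y \<equiv> s/(\<alpha>*w+\<beta>)" and "u \<equiv> s/(\<alpha>*(1+w))" and "v \<equiv> s*w/(\<beta>*(1+w))"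
  shows "(- a*\<alpha>*x - b*1/x) + (- a*\<beta>*y - b*1/y) = (- a*\<alpha>*u - b*1/u) + (- a*\<beta>* v - b*1/v)"
proof -
  have c: "\<alpha>*w+\<beta> > 0" using ab sw by (simp add: add_pos_pos)
  obtain c' where cdef: "\<alpha>*w+\<beta> = c'" by blast
  have c': "c' > 0" using c cdef by simp
  have 1: "\<alpha>*x + \<beta>*y = s" unfolding x_def y_def cdef using c' by (simp add: field_simps) (simp add: cdef[symmetric] algebra_simps)
  obtain d where ddef: "1+w = d" by blast
  have d: "d > 0" using sw ddef by simp
  have 2: "\<alpha>*u + \<beta>* v = s" unfolding u_def v_def ddef using ab sw d by (simp add: field_simps) (simp add: ddef[symmetric] algebra_simps)
  have 3: "1/x + 1/y = (\<alpha>*w+\<beta>)*(1+w)/(s*w)" unfolding x_def y_def cdef using c' sw by (simp add: field_simps)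
  have 4: "1/u + 1/v = (\<alpha>*w+\<beta>)*(1+w)/(s*w)" unfolding u_def v_def ddef using ab sw d by (simp add: field_simps)
  have "(- a*\<alpha>*x - b*1/x) + (- a*\<beta>*y - b*1/y) = - a*(\<alpha>*x + \<beta>*y) - b*(1/x+1/y)" by (simp add: algebra_simps)
  also have "\<dots> = - a*(\<alpha>*u + \<beta>* v) - b*(1/u+1/v)" unfolding 1 2 3 4 ..
  also have "\<dots> = (- a*\<alpha>*u - b*1/u) + (- a*\<beta>* v - b*1/v)" by (simp add: algebra_simps)
  finally show ?thesis .
qed

lemma pow_pt:
  fixes \<alpha> \<beta> s w lam :: real
  assumes ab: "\<alpha> > 0" "\<beta> > 0" and sw: "s > 0" "w > 0"
  defines "x \<equiv> s*w/(\<alpha>*w+\<beta>)" and "y \<equiv> s/(\<alpha>*w+\<beta>)" and "u \<equiv> s/(\<alpha>*(1+w))" and "v \<equiv> s*w/(\<beta>*(1+w))"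
  shows "x powr (lam-1) * y powr (-lam-1) * (s/(\<alpha>*w+\<beta>)^2)
       = (\<beta>/\<alpha>) powr lam * (u powr (-lam-1) * v powr (lam-1)) * (s/(\<alpha>*\<beta>*(1+w)^2))"
proof -
  have c: "\<alpha>*w+\<beta> > 0" using ab sw by (simp add: add_pos_pos)
  have w1: "1+w > 0" using sw by simp
  have pos: "x > 0" "y > 0" "u > 0" "v > 0" unfolding x_def y_def u_def v_def using c ab sw by auto
  have lx: "ln x = ln s + ln w - ln (\<alpha>*w+\<beta>)" unfolding x_def using c sw by (simp add: ln_div ln_mult)
  have ly: "ln y = ln s - ln (\<alpha>*w+\<beta>)" unfolding y_def using c sw by (simp add: ln_div)
  have lu: "ln u = ln s - ln \<alpha> - ln (1+w)" unfolding u_def using ab sw w1 by (simp add: ln_div ln_mult)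
  have lv: "ln v = ln s + ln w - ln \<beta> - ln (1+w)" unfolding v_def using ab sw w1 by (simp add: ln_div ln_mult)
  have "ln (x powr (lam-1) * y powr (-lam-1) * (s/(\<alpha>*w+\<beta>)^2))
      = (lam-1) * ln x + (-lam-1) * ln y + (ln s - 2 * ln (\<alpha>*w+\<beta>))"
    using pos c sw by (simp add: ln_mult ln_div ln_powr ln_realpow)
  also have "\<dots> = lam * (ln \<beta> - ln \<alpha>) + ((-lam-1) * ln u + (lam-1) * ln v) + (ln s - (ln \<alpha> + ln \<beta> + 2 * ln (1+w)))"
    unfolding lx ly lu lv by (simp add: algebra_simps)
  also have "\<dots> = ln ((\<beta>/\<alpha>) powr lam * (u powr (-lam-1) * v powr (lam-1)) * (s/(\<alpha>*\<beta>*(1+w)^2)))"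
    using pos ab sw w1 by (simp add: ln_mult ln_div ln_powr ln_realpow)
  finally show ?thesis
    using pos ab sw w1 c by (subst (asm) ln_inj_iff) auto
qed

lemma H_meas[measurable]: "H_IIIA \<alpha> \<beta> \<in> measurable (lborel \<Otimes>\<^sub>M lborel) (lborel \<Otimes>\<^sub>M lborel)"
  unfolding H_IIIA_def by measurable

lemma kern_meas[measurable]: "gig_kernel lam a b p q \<in> borel_measurable borel"
  unfolding gig_kernel_def by measurable

lemma kern_nonneg: "gig_kernel lam a b p q x \<ge> 0"
  unfolding gig_kernel_def by auto

lemma real_pt:
  fixes \<alpha> \<beta> s w lam a b C1 C2 :: real
  assumes ab: "\<alpha> > 0" "\<beta> > 0" and sw: "s > 0" "w > 0"
  defines "x \<equiv> s*w/(\<alpha>*w+\<beta>)" and "y \<equiv> s/(\<alpha>*w+\<beta>)" and "u \<equiv> s/(\<alpha>*(1+w))" and "v \<equiv> s*w/(\<beta>*(1+w))"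
  shows "gig_kernel lam a b \<alpha> 1 x / C1 * (gig_kernel (-lam) a b \<beta> 1 y / C2) * (s/(\<alpha>*w+\<beta>)^2)
     = ((\<beta>/\<alpha>) powr lam / (C1*C2)) * gig_kernel (-lam) a b \<alpha> 1 u * gig_kernel lam a b \<beta> 1 v * (s/(\<alpha>*\<beta>*(1+w)^2))"
proof -
  have c: "\<alpha>*w+\<beta> > 0" using ab sw by (simp add: add_pos_pos)
  have pos: "x > 0" "y > 0" "u > 0" "v > 0" unfolding x_def y_def u_def v_def using c ab sw by auto
  have P: "x powr (lam-1) * y powr (-lam-1) * (s/(\<alpha>*w+\<beta>)^2)
       = (\<beta>/\<alpha>) powr lam * (u powr (-lam-1) * v powr (lam-1)) * (s/(\<alpha>*\<beta>*(1+w)^2))"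
    unfolding x_def y_def u_def v_def by (rule pow_pt[OF ab sw])
  have E: "(- a*\<alpha>*x - b*1/x) + (- a*\<beta>*y - b*1/y) = (- a*\<alpha>*u - b*1/u) + (- a*\<beta>* v - b*1/v)"
    unfolding x_def y_def u_def v_def by (rule exp_pt[OF ab sw])
  have "gig_kernel lam a b \<alpha> 1 x / C1 * (gig_kernel (-lam) a b \<beta> 1 y / C2) * (s/(\<alpha>*w+\<beta>)^2)
      = (x powr (lam-1) * y powr (-lam-1) * (s/(\<alpha>*w+\<beta>)^2)) * exp ((- a*\<alpha>*x - b*1/x) + (- a*\<beta>*y - b*1/y)) / (C1*C2)"
    using pos by (simp add: gig_kernel_def exp_add mult_ac)
  also have "\<dots> = ((\<beta>/\<alpha>) powr lam * (u powr (-lam-1) * v powr (lam-1)) * (s/(\<alpha>*\<beta>*(1+w)^2))) * exp ((- a*\<alpha>*u - b*1/u) + (- a*\<beta>* v - b*1/v)) / (C1*C2)"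
    unfolding P E ..
  also have "\<dots> = ((\<beta>/\<alpha>) powr lam / (C1*C2)) * gig_kernel (-lam) a b \<alpha> 1 u * gig_kernel lam a b \<beta> 1 v * (s/(\<alpha>*\<beta>*(1+w)^2))"
    using pos by (simp add: gig_kernel_def exp_add mult_ac)
  finally show ?thesis .
qed

lemma core:
  fixes \<phi> :: "real \<times> real \<Rightarrow> ennreal" and \<alpha> \<beta> lam a b C1 C2 :: real
  assumes ab: "\<alpha> > 0" "\<beta> > 0" and C: "C1 > 0" "C2 > 0"
    and \<phi>[measurable]: "\<phi> \<in> borel_measurable (lborel \<Otimes>\<^sub>M lborel)"
  defines "K \<equiv> (\<beta>/\<alpha>) powr lam / (C1*C2)"
  shows "(\<integral>\<^sup>+z. \<phi> (H_IIIA \<alpha> \<beta> z) * ennreal (gig_kernel lam a b \<alpha> 1 (fst z) / C1 * (gig_kernel (-lam) a b \<beta> 1 (snd z) / C2)) \<partial>(lborel \<Otimes>\<^sub>M lborel))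
       = (\<integral>\<^sup>+z. \<phi> z * ennreal (K * gig_kernel (-lam) a b \<alpha> 1 (fst z) * gig_kernel lam a b \<beta> 1 (snd z)) \<partial>(lborel \<Otimes>\<^sub>M lborel))"
    (is "?L = ?R")
proof -
  let ?F1 = "\<lambda>z. \<phi> (H_IIIA \<alpha> \<beta> z) * ennreal (gig_kernel lam a b \<alpha> 1 (fst z) / C1 * (gig_kernel (-lam) a b \<beta> 1 (snd z) / C2))"
  let ?F2 = "\<lambda>z. \<phi> z * ennreal (K * gig_kernel (-lam) a b \<alpha> 1 (fst z) * gig_kernel lam a b \<beta> 1 (snd z))"
  have K0: "K \<ge> 0" unfolding K_def using C by simp
  have L: "?L = (\<integral>\<^sup>+w. indicator {0<..} w * (\<integral>\<^sup>+s. ?F1 (s*w/(\<alpha>*w+\<beta>), s/(\<alpha>*w+\<beta>)) * ennreal (s/(\<alpha>*w+\<beta>)^2) \<partial>lborel) \<partial>lborel)"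
  proof (rule T1[OF _ ab])
    show "?F1 \<in> borel_measurable (lborel \<Otimes>\<^sub>M lborel)" by measurable
  next
    fix x y :: real assume "\<not> (0 < x \<and> 0 < y)"
    then show "?F1 (x, y) = 0" by (auto simp: gig_kernel_def)
  qed
  have R: "?R = (\<integral>\<^sup>+w. indicator {0<..} w * (\<integral>\<^sup>+s. ?F2 (s/(\<alpha>*(1+w)), s*w/(\<beta>*(1+w))) * ennreal (s/(\<alpha>*\<beta>*(1+w)^2)) \<partial>lborel) \<partial>lborel)"
  proof (rule T2[OF _ ab])
    show "?F2 \<in> borel_measurable (lborel \<Otimes>\<^sub>M lborel)" by measurable
  next
    fix x y :: real assume "\<not> (0 < x \<and> 0 < y)"
    then show "?F2 (x, y) = 0" by (auto simp: gig_kernel_def)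
  qed
  have inner: "(\<integral>\<^sup>+s. ?F1 (s*w/(\<alpha>*w+\<beta>), s/(\<alpha>*w+\<beta>)) * ennreal (s/(\<alpha>*w+\<beta>)^2) \<partial>lborel)
      = (\<integral>\<^sup>+s. ?F2 (s/(\<alpha>*(1+w)), s*w/(\<beta>*(1+w))) * ennreal (s/(\<alpha>*\<beta>*(1+w)^2)) \<partial>lborel)"
    if w: "w > 0" for w
  proof (rule nn_integral_cong)
    fix s :: real
    show "?F1 (s*w/(\<alpha>*w+\<beta>), s/(\<alpha>*w+\<beta>)) * ennreal (s/(\<alpha>*w+\<beta>)^2)
        = ?F2 (s/(\<alpha>*(1+w)), s*w/(\<beta>*(1+w))) * ennreal (s/(\<alpha>*\<beta>*(1+w)^2))"
    proof (cases "s > 0")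
      case True
      have c: "\<alpha>*w+\<beta> > 0" using ab w by (simp add: add_pos_pos)
      note h = H_pt[OF ab True w]
      note r = real_pt[OF ab True w, of lam a b C1 C2, folded K_def]
      have n1: "0 \<le> gig_kernel lam a b \<alpha> 1 (s*w/(\<alpha>*w+\<beta>)) / C1 * (gig_kernel (-lam) a b \<beta> 1 (s/(\<alpha>*w+\<beta>)) / C2)"
        using C by (simp add: kern_nonneg)
      have n2: "0 \<le> s/(\<alpha>*w+\<beta>)^2" using True by simp
      have n3: "0 \<le> K * gig_kernel (-lam) a b \<alpha> 1 (s/(\<alpha>*(1+w))) * gig_kernel lam a b \<beta> 1 (s*w/(\<beta>*(1+w)))"
        using K0 by (simp add: kern_nonneg)
      have n4: "0 \<le> s/(\<alpha>*\<beta>*(1+w)^2)" using True ab w by simp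
      show ?thesis
        unfolding fst_conv snd_conv h mult.assoc[of "\<phi> (s/(\<alpha>*(1+w)), s*w/(\<beta>*(1+w)))"]
          ennreal_mult[OF n1 n2, symmetric] ennreal_mult[OF n3 n4, symmetric] r ..
    next
      case False
      have c: "\<alpha>*w+\<beta> > 0" using ab w by (simp add: add_pos_pos)
      have "s/(\<alpha>*w+\<beta>)^2 \<le> 0" "s/(\<alpha>*\<beta>*(1+w)^2) \<le> 0"
        using False ab w c by (auto intro!: divide_nonpos_pos)
      then show ?thesis by (simp add: ennreal_neg)
    qed
  qed
  show ?thesis unfolding L R
    apply (rule nn_integral_cong)
    subgoal for w by (cases "0 < w") (simp_all only: inner indicator_simps greaterThan_iff mult_zero_left not_False_eq_True)
    done
qed

lemma dens_meas[measurable]: "gig_density lam a b p q \<in> borel_measurable borel"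
  unfolding gig_density_def by measurable

lemma const_pos:
  assumes "prob_space M" and d: "distributed M lborel X (gig_density lam a b p q)"
  shows "gig_const lam a b p q > 0"
proof (rule ccontr)
  assume "\<not> gig_const lam a b p q > 0"
  then have z: "gig_density lam a b p q x = 0" for x
    unfolding gig_density_def using kern_nonneg[of lam a b p q x]
    by (simp add: ennreal_neg divide_nonneg_nonpos)
  interpret P: prob_space M by fact
  have Xm: "X \<in> measurable M lborel" using d by (rule distributed_measurable)
  interpret D: prob_space "distr M lborel X" by (rule P.prob_space_distr[OF Xm])
  have "emeasure (distr M lborel X) (space (distr M lborel X)) = 1" by (rule D.emeasure_space_1)
  also have "distr M lborel X = density lborel (gig_density lam a b p q)" using d by (rule distributed_distr_eq_density)
  finally show False by (subst (asm) emeasure_density) (simp_all add: z)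
qed

lemma indep_lborel:
  assumes "prob_space M" "prob_space.indep_var M borel X borel Y"
  shows "prob_space.indep_var M lborel X lborel Y"
proof -
  interpret P: prob_space M by fact
  show ?thesis using assms(2)
    unfolding P.indep_var_def P.indep_vars_def
    by (simp add: case_bool_if cong: if_cong)
qed

lemma pushforward:
  fixes \<alpha> \<beta> lam a b :: real
  assumes ab: "\<alpha> > 0" "\<beta> > 0"
    and C1: "gig_const lam a b \<alpha> 1 > 0" and C2: "gig_const (-lam) a b \<beta> 1 > 0"
  defines "K \<equiv> (\<beta>/\<alpha>) powr lam / (gig_const lam a b \<alpha> 1 * gig_const (-lam) a b \<beta> 1)"
  shows "distr (density (lborel \<Otimes>\<^sub>M lborel) (\<lambda>(x,y). gig_density lam a b \<alpha> 1 x * gig_density (-lam) a b \<beta> 1 y)) (lborel \<Otimes>\<^sub>M lborel) (H_IIIA \<alpha> \<beta>)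
       = density (lborel \<Otimes>\<^sub>M lborel) (\<lambda>z. ennreal (K * gig_kernel (-lam) a b \<alpha> 1 (fst z) * gig_kernel lam a b \<beta> 1 (snd z)))"
    (is "distr (density ?N ?p) ?N ?H = density ?N ?q")
proof (rule measure_eqI)
  show "sets (distr (density ?N ?p) ?N ?H) = sets (density ?N ?q)" by simp
next
  fix A assume "A \<in> sets (distr (density ?N ?p) ?N ?H)"
  then have A[measurable]: "A \<in> sets ?N" by simp
  then have A2[measurable]: "A \<in> sets (borel \<Otimes>\<^sub>M borel)" by simp
  have "emeasure (distr (density ?N ?p) ?N ?H) A = emeasure (density ?N ?p) (?H -` A \<inter> space (density ?N ?p))"
    by (rule emeasure_distr) (use A in simp_all)
  also have "\<dots> = (\<integral>\<^sup>+z. ?p z * indicator (?H -` A \<inter> space ?N) z \<partial>?N)"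
    using measurable_sets[OF H_meas A] by (subst emeasure_density) simp_all
  also have "\<dots> = (\<integral>\<^sup>+z. indicator A (?H z) * ennreal (gig_kernel lam a b \<alpha> 1 (fst z) / gig_const lam a b \<alpha> 1 * (gig_kernel (-lam) a b \<beta> 1 (snd z) / gig_const (-lam) a b \<beta> 1)) \<partial>?N)"
  proof (rule nn_integral_cong)
    fix z :: "real \<times> real"
    have "ennreal (gig_kernel lam a b \<alpha> 1 (fst z) / gig_const lam a b \<alpha> 1 * (gig_kernel (-lam) a b \<beta> 1 (snd z) / gig_const (-lam) a b \<beta> 1))
        = gig_density lam a b \<alpha> 1 (fst z) * gig_density (-lam) a b \<beta> 1 (snd z)"
      unfolding gig_density_def using C1 C2
      by (intro ennreal_mult) (simp_all add: kern_nonneg)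
    then show "?p z * indicator (?H -` A \<inter> space ?N) z = indicator A (?H z) * ennreal (gig_kernel lam a b \<alpha> 1 (fst z) / gig_const lam a b \<alpha> 1 * (gig_kernel (-lam) a b \<beta> 1 (snd z) / gig_const (-lam) a b \<beta> 1))"
      by (cases z) (simp add: indicator_def mult.commute space_pair_measure)
  qed
  also have "\<dots> = (\<integral>\<^sup>+z. indicator A z * ?q z \<partial>?N)"
    unfolding K_def by (rule core[OF ab C1 C2]) (use A2 in simp)
  also have "\<dots> = emeasure (density ?N ?q) A"
    by (subst emeasure_density) (simp_all add: mult.commute)
  finally show "emeasure (distr (density ?N ?p) ?N ?H) A = emeasure (density ?N ?q) A" .
qed

lemma normalize:
  fixes f g :: "real \<Rightarrow> real" and K :: real
  assumes [measurable]: "f \<in> borel_measurable borel" "g \<in> borel_measurable borel"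
    and fn: "\<And>x. f x \<ge> 0" and gn: "\<And>x. g x \<ge> 0" and K: "K > 0"
    and P: "prob_space (density (lborel \<Otimes>\<^sub>M lborel) (\<lambda>z. ennreal (K * f (fst z) * g (snd z))))"
  shows "integrable lborel f" "integrable lborel g" "integral\<^sup>L lborel f > 0" "integral\<^sup>L lborel g > 0"
    "K * integral\<^sup>L lborel f * integral\<^sup>L lborel g = 1"
proof -
  interpret P: prob_space "density (lborel \<Otimes>\<^sub>M lborel) (\<lambda>z. ennreal (K * f (fst z) * g (snd z)))" by (rule P)
  let ?If = "\<integral>\<^sup>+x. ennreal (f x) \<partial>lborel" and ?Ig = "\<integral>\<^sup>+x. ennreal (g x) \<partial>lborel"
  have "1 = emeasure (density (lborel \<Otimes>\<^sub>M lborel) (\<lambda>z. ennreal (K * f (fst z) * g (snd z)))) (space (lborel \<Otimes>\<^sub>M lborel))"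
    using P.emeasure_space_1 by simp
  also have "\<dots> = (\<integral>\<^sup>+z. ennreal (K * f (fst z) * g (snd z)) \<partial>(lborel \<Otimes>\<^sub>M lborel))"
    by (subst emeasure_density) (use sets.top[of "lborel \<Otimes>\<^sub>M lborel"] in simp_all)
  also have "\<dots> = (\<integral>\<^sup>+x. \<integral>\<^sup>+y. ennreal (K * f x) * ennreal (g y) \<partial>lborel \<partial>lborel)"
    using K fn gn by (subst lborel.nn_integral_fst[symmetric]) (simp_all add: ennreal_mult)
  also have "\<dots> = (\<integral>\<^sup>+x. ennreal (K * f x) * ?Ig \<partial>lborel)"
    by (simp add: nn_integral_cmult)
  also have "\<dots> = ennreal K * ?If * ?Ig"
    using K fn by (simp add: nn_integral_multc nn_integral_cmult ennreal_mult)
  finally have eq: "ennreal K * ?If * ?Ig = 1" ..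
  have nz: "?If \<noteq> 0" "?Ig \<noteq> 0" using eq by auto
  have nt: "?If \<noteq> \<top>" "?Ig \<noteq> \<top>" using eq nz K by (auto simp: ennreal_mult_eq_top_iff)
  show fi: "integrable lborel f" using nt fn by (intro integrableI_nonneg) (simp_all add: top.not_eq_extremum)
  show gi: "integrable lborel g" using nt gn by (intro integrableI_nonneg) (simp_all add: top.not_eq_extremum)
  have ef: "?If = ennreal (integral\<^sup>L lborel f)" using fi fn by (intro nn_integral_eq_integral) simp_all
  have eg: "?Ig = ennreal (integral\<^sup>L lborel g)" using gi gn by (intro nn_integral_eq_integral) simp_all
  have f0: "integral\<^sup>L lborel f \<ge> 0" "integral\<^sup>L lborel g \<ge> 0" using fn gn by simp_all
  show "integral\<^sup>L lborel f > 0" using nz ef f0 by (auto simp: less_le)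
  show "integral\<^sup>L lborel g > 0" using nz eg f0 by (auto simp: less_le)
  show "K * integral\<^sup>L lborel f * integral\<^sup>L lborel g = 1"
    using eq K f0 unfolding ef eg by (simp add: ennreal_mult[symmetric])
qed

lemma marg:
  assumes "prob_space D3" "prob_space D4" "sets D3 = sets lborel" "sets D4 = sets lborel"
  shows "distr (D3 \<Otimes>\<^sub>M D4) lborel fst = D3" "distr (D3 \<Otimes>\<^sub>M D4) lborel snd = D4"
proof -
  interpret D3: prob_space D3 by fact
  interpret D4: prob_space D4 by fact
  have sp3: "space D3 = UNIV" using sets_eq_imp_space_eq[OF assms(3)] by simp
  have sp4: "space D4 = UNIV" using sets_eq_imp_space_eq[OF assms(4)] by simp
  show "distr (D3 \<Otimes>\<^sub>M D4) lborel fst = D3"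
  proof (rule measure_eqI)
    show "sets (distr (D3 \<Otimes>\<^sub>M D4) lborel fst) = sets D3" using assms(3) by simp
  next
    fix A assume "A \<in> sets (distr (D3 \<Otimes>\<^sub>M D4) lborel fst)"
    then have A: "A \<in> sets D3" using assms(3) by simp
    have m: "fst \<in> measurable (D3 \<Otimes>\<^sub>M D4) lborel"
      by (subst measurable_cong_sets[OF refl assms(3), symmetric]) (rule measurable_fst)
    have "emeasure (distr (D3 \<Otimes>\<^sub>M D4) lborel fst) A = emeasure (D3 \<Otimes>\<^sub>M D4) (fst -` A \<inter> space (D3 \<Otimes>\<^sub>M D4))"
      using A assms(3) by (intro emeasure_distr m) simp
    also have "fst -` A \<inter> space (D3 \<Otimes>\<^sub>M D4) = A \<times> space D4"
      using sets.sets_into_space[OF A] by (auto simp: space_pair_measure sp3 sp4)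
    also have "emeasure (D3 \<Otimes>\<^sub>M D4) (A \<times> space D4) = emeasure D3 A * emeasure D4 (space D4)"
      using A by (intro D4.emeasure_pair_measure_Times) simp_all
    finally show "emeasure (distr (D3 \<Otimes>\<^sub>M D4) lborel fst) A = emeasure D3 A" by (simp add: D4.emeasure_space_1)
  qed
  show "distr (D3 \<Otimes>\<^sub>M D4) lborel snd = D4"
  proof (rule measure_eqI)
    show "sets (distr (D3 \<Otimes>\<^sub>M D4) lborel snd) = sets D4" using assms(4) by simp
  next
    fix A assume "A \<in> sets (distr (D3 \<Otimes>\<^sub>M D4) lborel snd)"
    then have A: "A \<in> sets D4" using assms(4) by simp
    have m: "snd \<in> measurable (D3 \<Otimes>\<^sub>M D4) lborel"
      by (subst measurable_cong_sets[OF refl assms(4), symmetric]) (rule measurable_snd)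
    have "emeasure (distr (D3 \<Otimes>\<^sub>M D4) lborel snd) A = emeasure (D3 \<Otimes>\<^sub>M D4) (snd -` A \<inter> space (D3 \<Otimes>\<^sub>M D4))"
      using A assms(4) by (intro emeasure_distr m) simp
    also have "snd -` A \<inter> space (D3 \<Otimes>\<^sub>M D4) = space D3 \<times> A"
      using sets.sets_into_space[OF A] by (auto simp: space_pair_measure sp3 sp4)
    also have "emeasure (D3 \<Otimes>\<^sub>M D4) (space D3 \<times> A) = emeasure D3 (space D3) * emeasure D4 A"
      using A by (intro D4.emeasure_pair_measure_Times) simp_all
    finally show "emeasure (distr (D3 \<Otimes>\<^sub>M D4) lborel snd) A = emeasure D4 A" by (simp add: D3.emeasure_space_1)
  qed
qed

lemma dens_prob:
  assumes C: "gig_const lam a b p q > 0"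
    and i: "integrable lborel (gig_kernel lam a b p q)"
  shows "prob_space (density lborel (gig_density lam a b p q))"
proof (rule prob_spaceI)
  have "emeasure (density lborel (gig_density lam a b p q)) (space (density lborel (gig_density lam a b p q)))
     = (\<integral>\<^sup>+x. ennreal (gig_kernel lam a b p q x / gig_const lam a b p q) \<partial>lborel)"
    by (subst emeasure_density) (simp_all add: gig_density_def)
  also have "\<dots> = ennreal (\<integral>x. gig_kernel lam a b p q x / gig_const lam a b p q \<partial>lborel)"
    using i C by (intro nn_integral_eq_integral) (simp_all add: kern_nonneg)
  also have "\<dots> = 1" using C by (simp add: gig_const_def[symmetric])
  finally show "emeasure (density lborel (gig_density lam a b p q)) (space (density lborel (gig_density lam a b p q))) = 1" .
qed

theorem theorem1p1:
  fixes M :: "'w measure" and X Y :: "'w \<Rightarrow> real"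
    and \<alpha> \<beta> lam a b :: real
  assumes "prob_space M"
    and "\<alpha> > 0" and "\<beta> > 0" and "a > 0" and "b > 0"
    and "prob_space.indep_var M borel X borel Y"
    and "distributed M lborel X (gig_density lam a b \<alpha> 1)"
    and "distributed M lborel Y (gig_density (- lam) a b \<beta> 1)"
  shows "prob_space.indep_var M
           borel (\<lambda>\<omega>. fst (H_IIIA \<alpha> \<beta> (X \<omega>, Y \<omega>)))
           borel (\<lambda>\<omega>. snd (H_IIIA \<alpha> \<beta> (X \<omega>, Y \<omega>)))
       \<and> distributed M lborel (\<lambda>\<omega>. fst (H_IIIA \<alpha> \<beta> (X \<omega>, Y \<omega>))) (gig_density (- lam) a b \<alpha> 1)
       \<and> distributed M lborel (\<lambda>\<omega>. snd (H_IIIA \<alpha> \<beta> (X \<omega>, Y \<omega>))) (gig_density lam a b \<beta> 1)"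
proof -
  interpret P: prob_space M by fact
  note ab = assms(2) assms(3)
  have C1: "gig_const lam a b \<alpha> 1 > 0" by (rule const_pos[OF assms(1) assms(7)])
  have C2: "gig_const (-lam) a b \<beta> 1 > 0" by (rule const_pos[OF assms(1) assms(8)])
  have ind: "P.indep_var lborel X lborel Y" by (rule indep_lborel[OF assms(1) assms(6)])
  have joint: "distributed M (lborel \<Otimes>\<^sub>M lborel) (\<lambda>\<omega>. (X \<omega>, Y \<omega>)) (\<lambda>(x,y). gig_density lam a b \<alpha> 1 x * gig_density (-lam) a b \<beta> 1 y)"
    by (rule P.distributed_joint_indep[OF sigma_finite_lborel sigma_finite_lborel assms(7) assms(8) ind])
  have XYm: "(\<lambda>\<omega>. (X \<omega>, Y \<omega>)) \<in> measurable M (lborel \<Otimes>\<^sub>M lborel)" using joint by (rule distributed_measurable)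
  define K where "K = (\<beta>/\<alpha>) powr lam / (gig_const lam a b \<alpha> 1 * gig_const (-lam) a b \<beta> 1)"
  have K: "K > 0" using C1 C2 ab unfolding K_def by simp
  define UV where "UV = (\<lambda>\<omega>. H_IIIA \<alpha> \<beta> (X \<omega>, Y \<omega>))"
  have UVm: "UV \<in> measurable M (lborel \<Otimes>\<^sub>M lborel)"
    unfolding UV_def by (rule measurable_compose[OF XYm H_meas])
  have distUV: "distr M (lborel \<Otimes>\<^sub>M lborel) UV = density (lborel \<Otimes>\<^sub>M lborel) (\<lambda>z. ennreal (K * gig_kernel (-lam) a b \<alpha> 1 (fst z) * gig_kernel lam a b \<beta> 1 (snd z)))"
  proof -
    have "distr M (lborel \<Otimes>\<^sub>M lborel) UV = distr (distr M (lborel \<Otimes>\<^sub>M lborel) (\<lambda>\<omega>. (X \<omega>, Y \<omega>))) (lborel \<Otimes>\<^sub>M lborel) (H_IIIA \<alpha> \<beta>)"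
      using distr_distr[OF H_meas XYm] by (simp add: comp_def UV_def)
    also have "\<dots> = distr (density (lborel \<Otimes>\<^sub>M lborel) (\<lambda>(x,y). gig_density lam a b \<alpha> 1 x * gig_density (-lam) a b \<beta> 1 y)) (lborel \<Otimes>\<^sub>M lborel) (H_IIIA \<alpha> \<beta>)"
      unfolding distributed_distr_eq_density[OF joint] ..
    also have "\<dots> = density (lborel \<Otimes>\<^sub>M lborel) (\<lambda>z. ennreal (K * gig_kernel (-lam) a b \<alpha> 1 (fst z) * gig_kernel lam a b \<beta> 1 (snd z)))"
      unfolding K_def by (rule pushforward[OF ab C1 C2])
    finally show ?thesis .
  qed
  have Pq: "prob_space (density (lborel \<Otimes>\<^sub>M lborel) (\<lambda>z. ennreal (K * gig_kernel (-lam) a b \<alpha> 1 (fst z) * gig_kernel lam a b \<beta> 1 (snd z))))"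
    using P.prob_space_distr[OF UVm] unfolding distUV .
  note nm = normalize[OF kern_meas kern_meas kern_nonneg kern_nonneg K Pq]
  have C3: "gig_const (-lam) a b \<alpha> 1 > 0" using nm(3) by (simp add: gig_const_def)
  have C4: "gig_const lam a b \<beta> 1 > 0" using nm(4) by (simp add: gig_const_def)
  have KC: "K * gig_const (-lam) a b \<alpha> 1 * gig_const lam a b \<beta> 1 = 1" using nm(5) by (simp add: gig_const_def)
  have Keq: "K = 1 / (gig_const (-lam) a b \<alpha> 1 * gig_const lam a b \<beta> 1)"
    using KC C3 C4 by (simp add: field_simps)
  have qeq: "(\<lambda>z. ennreal (K * gig_kernel (-lam) a b \<alpha> 1 (fst z) * gig_kernel lam a b \<beta> 1 (snd z)))
      = (\<lambda>(u,v). gig_density (-lam) a b \<alpha> 1 u * gig_density lam a b \<beta> 1 v)"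
  proof (rule ext, clarify)
    fix u v :: real
    have h: "K * gig_kernel (-lam) a b \<alpha> 1 u * gig_kernel lam a b \<beta> 1 v
       = gig_kernel (-lam) a b \<alpha> 1 u / gig_const (-lam) a b \<alpha> 1 * (gig_kernel lam a b \<beta> 1 v / gig_const lam a b \<beta> 1)"
      unfolding Keq by simp
    show "ennreal (K * gig_kernel (-lam) a b \<alpha> 1 (fst (u,v)) * gig_kernel lam a b \<beta> 1 (snd (u,v)))
      = gig_density (-lam) a b \<alpha> 1 u * gig_density lam a b \<beta> 1 v"
      unfolding gig_density_def fst_conv snd_conv h using C3 C4 by (intro ennreal_mult) (simp_all add: kern_nonneg)
  qed
  have D3: "prob_space (density lborel (gig_density (-lam) a b \<alpha> 1))"
    using C3 nm(1) by (rule dens_prob)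
  have D4: "prob_space (density lborel (gig_density lam a b \<beta> 1))"
    using C4 nm(2) by (rule dens_prob)
  have prod: "distr M (lborel \<Otimes>\<^sub>M lborel) UV = density lborel (gig_density (-lam) a b \<alpha> 1) \<Otimes>\<^sub>M density lborel (gig_density lam a b \<beta> 1)"
    unfolding distUV qeq
    by (rule pair_measure_density[symmetric]) (simp_all add: sigma_finite_lborel D4 prob_space_imp_sigma_finite)
  have s3: "sets (density lborel (gig_density (-lam) a b \<alpha> 1)) = sets lborel" by simp
  have s4: "sets (density lborel (gig_density lam a b \<beta> 1)) = sets lborel" by simp
  note mg = marg[OF D3 D4 s3 s4]
  have Um: "(\<lambda>\<omega>. fst (UV \<omega>)) \<in> measurable M lborel" by (rule measurable_compose[OF UVm measurable_fst])
  have Vm: "(\<lambda>\<omega>. snd (UV \<omega>)) \<in> measurable M lborel" by (rule measurable_compose[OF UVm measurable_snd])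
  have dU: "distr M lborel (\<lambda>\<omega>. fst (UV \<omega>)) = density lborel (gig_density (-lam) a b \<alpha> 1)"
  proof -
    have "distr M lborel (\<lambda>\<omega>. fst (UV \<omega>)) = distr (distr M (lborel \<Otimes>\<^sub>M lborel) UV) lborel fst"
      using distr_distr[OF measurable_fst UVm] by (simp add: comp_def)
    then show ?thesis unfolding prod mg(1) .
  qed
  have dV: "distr M lborel (\<lambda>\<omega>. snd (UV \<omega>)) = density lborel (gig_density lam a b \<beta> 1)"
  proof -
    have "distr M lborel (\<lambda>\<omega>. snd (UV \<omega>)) = distr (distr M (lborel \<Otimes>\<^sub>M lborel) UV) lborel snd"
      using distr_distr[OF measurable_snd UVm] by (simp add: comp_def)
    then show ?thesis unfolding prod mg(2) .
  qed
  have distU: "distributed M lborel (\<lambda>\<omega>. fst (UV \<omega>)) (gig_density (-lam) a b \<alpha> 1)"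
    unfolding distributed_def using dU Um by simp
  have distV: "distributed M lborel (\<lambda>\<omega>. snd (UV \<omega>)) (gig_density lam a b \<beta> 1)"
    unfolding distributed_def using dV Vm by simp
  have indep: "P.indep_var borel (\<lambda>\<omega>. fst (UV \<omega>)) borel (\<lambda>\<omega>. snd (UV \<omega>))"
    unfolding P.indep_var_distribution_eq
  proof (intro conjI)
    show "(\<lambda>\<omega>. fst (UV \<omega>)) \<in> measurable M borel" using Um by simp
    show "(\<lambda>\<omega>. snd (UV \<omega>)) \<in> measurable M borel" using Vm by simp
    have e1: "distr M borel (\<lambda>\<omega>. fst (UV \<omega>)) = distr M lborel (\<lambda>\<omega>. fst (UV \<omega>))" by (rule distr_cong) simp_all
    have e2: "distr M borel (\<lambda>\<omega>. snd (UV \<omega>)) = distr M lborel (\<lambda>\<omega>. snd (UV \<omega>))" by (rule distr_cong) simp_all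
    have e3: "distr M (borel \<Otimes>\<^sub>M borel) (\<lambda>\<omega>. (fst (UV \<omega>), snd (UV \<omega>))) = distr M (lborel \<Otimes>\<^sub>M lborel) UV"
      by (rule distr_cong) (simp, rule sets_pair_measure_cong, simp_all)
    show "distr M borel (\<lambda>\<omega>. fst (UV \<omega>)) \<Otimes>\<^sub>M distr M borel (\<lambda>\<omega>. snd (UV \<omega>)) = distr M (borel \<Otimes>\<^sub>M borel) (\<lambda>\<omega>. (fst (UV \<omega>), snd (UV \<omega>)))"
      unfolding e1 e2 e3 dU dV prod ..
  qed
  show ?thesis using indep distU distV unfolding UV_def by (intro conjI)
qed

end
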